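(* Let $A\in\mathbb{R}^{r\times n}$ ($r\le n$) have full row rank with singular values $\sigma_1\ge\dots\ge\sigma_r>0$, let $F\in\mathbb{R}^{K\times n}$ satisfy $FA^T\neq 0$, and let $D^*=FA^T(AA^T)^{-1}$. Define the spectral risk $\gamma=\|D^*\|_F^2\|A\|_F^2/\|D^*A\|_F^2$ and $\tilde\sigma_i^2=\sigma_i^2/\sum_{j=1}^r\sigma_j^2$. Then $\gamma\ge1$ and $$1\le\frac{1}{\tilde\sigma_1^2}\le\gamma\le\frac{1}{\tilde\sigma_r^2}.$$ Moreover $\gamma=1$ if and only if $r=1$.
   Context: $D^*$ is the minimizer of the linear regression problem $\min_D\|F-DA\|_F^2$; $F$ is an arbitrary target matrix. *)

theory Defs
  imports "HOL-Analysis.Analysis"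
begin

definition frob_sq :: "real^'n^'m \<Rightarrow> real" where
  "frob_sq M = (\<Sum>i\<in>UNIV. \<Sum>j\<in>UNIV. (M $ i $ j)^2)"

text \<open>sv 1 \<ge> ... \<ge> sv r (r = number of rows) are the singular values of A,
  i.e. their squares are the eigenvalues (with multiplicity) of A A^T:
  A A^T = U diag(sv^2) U^T for some orthogonal U, after some enumeration e of the row index type.\<close>
definition singular_values :: "real^'n^'r \<Rightarrow> (nat \<Rightarrow> real) \<Rightarrow> bool" where
  "singular_values A sv \<longleftrightarrow>
     (\<forall>i\<in>{1..<CARD('r)}. sv (Suc i) \<le> sv i) \<and>
     (\<forall>i\<in>{1..CARD('r)}. 0 \<le> sv i) \<and>
     (\<exists>(e::'r \<Rightarrow> nat) (U::real^'r^'r). bij_betw e UNIV {1..CARD('r)} \<and> orthogonal_matrix U \<and>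
        A ** transpose A = U ** (\<chi> i j. if i = j then (sv (e i))^2 else 0) ** transpose U)"

end

theory Submission imports Defs begin

lemma frob_trace: "frob_sq (M::real^'n^'m) = (\<Sum>i\<in>UNIV. (M ** transpose M)$i$i)"
  unfolding frob_sq_def matrix_matrix_mult_def transpose_def by (simp add: power2_eq_square)

lemma frob_orth: assumes "orthogonal_matrix U" shows "frob_sq (M ** (U::real^'n^'n)) = frob_sq (M::real^'n^'m)"
proof -
  have "(M ** U) ** transpose (M ** U) = M ** transpose M"
    using assms by (simp add: matrix_transpose_mul matrix_mul_assoc orthogonal_matrix_def)
       (metis matrix_mul_assoc matrix_mul_rid)
  then show ?thesis by (simp add: frob_trace)
qed

lemma diag_right: "((W::real^'n^'m) ** (\<chi> i j. if i = j then l i else 0))$i$k = W$i$k * l k"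
  unfolding matrix_matrix_mult_def by (simp add: if_distrib cong: if_cong)

lemma diag_quad: "((W::real^'n^'m) ** (\<chi> i j. if i = j then l i else 0) ** transpose W)$i$i = (\<Sum>k\<in>UNIV. (W$i$k)^2 * l k)"
  unfolding matrix_matrix_mult_def[of "W ** _"] by (simp add: diag_right transpose_def power2_eq_square mult_ac)

lemma mzero_l: "(0::real^'n^'m) ** (B::real^'k^'n) = 0"
  unfolding matrix_matrix_mult_def by (simp add: vec_eq_iff)

lemma ar1: fixes C Q S M :: real assumes "C>0" "M>0" "Q>0" "Q \<le> M*C" "S \<ge> 0"
  shows "S/M \<le> C*S/Q"
proof -
  have "S*Q \<le> S*(M*C)" using assms by (simp add: mult_left_mono)
  thus ?thesis using assms by (simp add: divide_le_eq le_divide_eq mult_ac)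
qed
lemma ar2: fixes C Q S m :: real assumes "C>0" "m>0" "Q>0" "m*C \<le> Q" "S \<ge> 0"
  shows "C*S/Q \<le> S/m"
proof -
  have "S*(m*C) \<le> S*Q" using assms by (simp add: mult_left_mono)
  thus ?thesis using assms by (simp add: divide_le_eq le_divide_eq mult_ac)
qed

lemma mono_sv: assumes "\<forall>i\<in>{1..<N}. s (Suc i) \<le> (s i::real)" "1 \<le> i" "i \<le> j" "j \<le> N"
  shows "s j \<le> s i"
  using assms(3,4)
proof (induction j rule: dec_induct)
  case base then show ?case by simp
next
  case (step j)
  have "j \<in> {1..<N}" using step.hyps step.prems assms(2) by auto
  hence "s (Suc j) \<le> s j" using assms(1) by blast
  moreover have "s j \<le> s i" using step.IH step.prems by simp
  ultimately show ?case by linarith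
qed

theorem proposition4:
  fixes A :: "real^'n^'r" and F :: "real^'n^'k" and sv :: "nat \<Rightarrow> real"
  assumes "CARD('r) \<le> CARD('n)"
    and "rank A = CARD('r)"
    and "singular_values A sv"
    and "\<forall>i\<in>{1..CARD('r)}. sv i > 0"
    and "F ** transpose A \<noteq> 0"
  shows "let D = F ** transpose A ** matrix_inv (A ** transpose A);
             \<gamma> = frob_sq D * frob_sq A / frob_sq (D ** A);
             st = (\<lambda>i. (sv i)^2 / (\<Sum>j=1..CARD('r). (sv j)^2))
         in \<gamma> \<ge> 1 \<and> 1 \<le> 1 / st 1 \<and> 1 / st 1 \<le> \<gamma> \<and> \<gamma> \<le> 1 / st (CARD('r)) \<and>
            (\<gamma> = 1 \<longleftrightarrow> CARD('r) = 1)"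
proof -
  define N where "N = CARD('r)"
  have N1: "1 \<le> N" unfolding N_def by (simp add: Suc_leI)
  have mono: "\<forall>i\<in>{1..<N}. sv (Suc i) \<le> sv i" and pos: "\<forall>i\<in>{1..N}. sv i > 0"
    using assms(3,4) unfolding singular_values_def N_def by auto
  obtain e :: "'r \<Rightarrow> nat" and U :: "real^'r^'r" where
    e: "bij_betw e UNIV {1..N}" and oU: "orthogonal_matrix U" and
    G: "A ** transpose A = U ** (\<chi> i j. if i = j then (sv (e i))^2 else 0) ** transpose U"
    using assms(3) unfolding singular_values_def N_def by blast
  define lam where "lam k = (sv (e k))^2" for k
  define L where "L = (\<chi> i j. if i = j then lam i else 0 :: real^'r^'r)"
  define Li where "Li = (\<chi> i j. if i = j then 1 / lam i else 0 :: real^'r^'r)"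
  have ek: "e k \<in> {1..N}" for k using e bij_betwE by blast
  have svb: "sv N \<le> sv j \<and> sv j \<le> sv 1" if "j \<in> {1..N}" for j
    using mono_sv[OF mono] that N1 by auto
  have lampos: "lam k > 0" for k
  proof -
    have "sv (e k) > 0" using pos ek by blast
    thus ?thesis unfolding lam_def by simp
  qed
  have lamb: "(sv N)^2 \<le> lam k \<and> lam k \<le> (sv 1)^2" for k
    unfolding lam_def using svb[OF ek[of k]] pos ek[of k] N1
    by (metis atLeastAtMost_iff dual_order.refl order_less_imp_le power_mono)
  have GL: "A ** transpose A = U ** L ** transpose U" using G unfolding L_def lam_def by simp
  have LLi: "L ** Li = mat 1"
  proof -
    have "(L ** Li)$i$j = (mat 1 :: real^'r^'r)$i$j" for i j
      unfolding Li_def diag_right using lampos[of j] by (simp add: L_def mat_def)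
    thus ?thesis by (simp add: vec_eq_iff)
  qed
  have UtU: "transpose U ** U = mat 1" and UUt: "U ** transpose U = mat 1"
    using oU unfolding orthogonal_matrix_def by auto
  define G0 where "G0 = A ** transpose A"
  have "G0 ** (U ** Li ** transpose U) = U ** (L ** (transpose U ** U) ** Li) ** transpose U"
    unfolding G0_def GL by (simp add: matrix_mul_assoc)
  also have "\<dots> = mat 1" using UtU LLi UUt by simp
  finally have GR: "G0 ** (U ** Li ** transpose U) = mat 1" .
  hence "invertible G0" unfolding invertible_def using matrix_left_right_inverse by blast
  hence inv: "G0 ** matrix_inv G0 = mat 1 \<and> matrix_inv G0 ** G0 = mat 1"
    unfolding invertible_def matrix_inv_def by (rule someI_ex)
  define D where "D = F ** transpose A ** matrix_inv G0"
  have DG: "D ** G0 = F ** transpose A"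
    unfolding D_def using inv by (metis matrix_mul_assoc matrix_mul_rid)
  define W where "W = D ** U"
  have DW: "D = W ** transpose U" unfolding W_def using UUt by (metis matrix_mul_assoc matrix_mul_rid)
  have Dnz: "D \<noteq> 0" using DG assms(5) by (metis mzero_l)
  hence Wnz: "W \<noteq> 0" using DW by (metis mzero_l)
  define c where "c k = (\<Sum>i\<in>UNIV. (W$i$k)^2)" for k
  have fD: "frob_sq D = (\<Sum>k\<in>UNIV. c k)"
  proof -
    have "frob_sq D = frob_sq W" using frob_orth[OF oU, of D] unfolding W_def by simp
    also have "\<dots> = (\<Sum>k\<in>UNIV. c k)" unfolding frob_sq_def c_def by (rule sum.swap)
    finally show ?thesis .
  qed
  have "(D ** A) ** transpose (D ** A) = W ** L ** transpose W"
  proof -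
    have "(D ** A) ** transpose (D ** A) = D ** (A ** transpose A) ** transpose D"
      by (simp add: matrix_transpose_mul matrix_mul_assoc)
    also have "\<dots> = D ** (U ** L ** transpose U) ** transpose D" by (simp only: GL)
    also have "\<dots> = W ** L ** transpose W" unfolding W_def by (simp add: matrix_transpose_mul matrix_mul_assoc)
    finally show ?thesis .
  qed
  hence "frob_sq (D ** A) = (\<Sum>i\<in>UNIV. \<Sum>k\<in>UNIV. (W$i$k)^2 * lam k)"
    by (simp only: frob_trace L_def diag_quad)
  also have "\<dots> = (\<Sum>k\<in>UNIV. \<Sum>i\<in>UNIV. (W$i$k)^2 * lam k)" by (rule sum.swap)
  also have "\<dots> = (\<Sum>k\<in>UNIV. lam k * c k)" unfolding c_def
    by (simp add: sum_distrib_left mult.commute)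
  finally have fDA: "frob_sq (D ** A) = (\<Sum>k\<in>UNIV. lam k * c k)" .
  have colU: "(\<Sum>i\<in>UNIV. (U$i$k)^2) = 1" for k
  proof -
    have "(transpose U ** U)$k$k = 1" using UtU by (simp add: mat_def)
    thus ?thesis unfolding matrix_matrix_mult_def transpose_def by (simp add: power2_eq_square)
  qed
  have fA: "frob_sq A = (\<Sum>k\<in>UNIV. lam k)"
  proof -
    have "frob_sq A = (\<Sum>i\<in>UNIV. (U ** L ** transpose U)$i$i)" unfolding frob_trace GL ..
    also have "\<dots> = (\<Sum>i\<in>UNIV. \<Sum>k\<in>UNIV. (U$i$k)^2 * lam k)"
      by (simp only: L_def diag_quad)
    also have "\<dots> = (\<Sum>k\<in>UNIV. \<Sum>i\<in>UNIV. (U$i$k)^2 * lam k)" by (rule sum.swap)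
    also have "\<dots> = (\<Sum>k\<in>UNIV. lam k * (\<Sum>i\<in>UNIV. (U$i$k)^2))"
      by (simp add: sum_distrib_left mult.commute)
    finally show ?thesis using colU by simp
  qed
  define S where "S = (\<Sum>j=1..N. (sv j)^2)"
  have SA: "frob_sq A = S" unfolding fA S_def lam_def using sum.reindex_bij_betw[OF e, of "\<lambda>j. (sv j)^2"] by simp
  define C where "C = (\<Sum>k\<in>UNIV. c k)"
  define Q where "Q = (\<Sum>k\<in>UNIV. lam k * c k)"
  have cnn: "c k \<ge> 0" for k unfolding c_def by (simp add: sum_nonneg)
  obtain i k where "W$i$k \<noteq> 0" using Wnz by (metis vec_eq_iff zero_index)
  hence "c k > 0" unfolding c_def
    by (metis (no_types, lifting) UNIV_I finite sum_pos2 zero_le_power2 zero_less_power2)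
  hence Cpos: "C > 0" unfolding C_def using cnn by (metis UNIV_I finite sum_pos2)
  have Qlo: "(sv N)^2 * C \<le> Q" unfolding Q_def C_def sum_distrib_left
    by (rule sum_mono) (rule mult_right_mono[OF conjunct1[OF lamb] cnn])
  have Qhi: "Q \<le> (sv 1)^2 * C" unfolding Q_def C_def sum_distrib_left
    by (rule sum_mono) (rule mult_right_mono[OF conjunct2[OF lamb] cnn])
  have "sv N > 0" "sv 1 > 0" using pos N1 by auto
  hence m0: "(sv N)^2 > 0" and M0: "(sv 1)^2 > 0" by simp_all
  have Qpos: "Q > 0" using Qlo m0 Cpos by (smt (verit) mult_pos_pos)
  have SM: "S \<ge> (sv 1)^2" unfolding S_def using N1
    by (intro member_le_sum) auto
  have SM2: "S > (sv 1)^2" if "N \<noteq> 1"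
  proof -
    have "{1,2} \<subseteq> {1..N}" using that N1 by auto
    hence "(\<Sum>j\<in>{1,2}. (sv j)^2) \<le> S" unfolding S_def by (intro sum_mono2) auto
    moreover have "sv 2 > 0" using pos that N1 by auto
    hence "(sv 2)^2 > 0" by simp
    moreover have "(\<Sum>j\<in>{1,2}. (sv j)^2) = (sv 1)^2 + (sv 2)^2" by simp
    ultimately show ?thesis by linarith
  qed
  have S1: "S = (sv 1)^2" if "N = 1" unfolding S_def that by simp
  define g where "g = C * S / Q"
  have S0: "S \<ge> 0" using SM by (smt (verit) zero_le_power2)
  have g1: "S / (sv 1)^2 \<le> g" unfolding g_def by (rule ar1) (use Cpos M0 Qpos Qhi S0 in auto)
  have g2: "g \<le> S / (sv N)^2" unfolding g_def by (rule ar2) (use Cpos m0 Qpos Qlo S0 in auto)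
  have r1: "1 \<le> S / (sv 1)^2" using SM M0 by simp
  have e1: "1 / ((sv 1)^2 / S) = S / (sv 1)^2" by simp
  have e2: "1 / ((sv N)^2 / S) = S / (sv N)^2" by simp
  have iff: "g = 1 \<longleftrightarrow> N = 1"
  proof
    assume "g = 1"
    show "N = 1"
    proof (rule ccontr)
      assume "N \<noteq> 1"
      hence "S / (sv 1)^2 > 1" using SM2 M0 by simp
      thus False using g1 \<open>g = 1\<close> by simp
    qed
  next
    assume N: "N = 1"
    have a: "S / (sv 1)^2 = 1" using S1[OF N] M0 by simp
    have b: "S / (sv N)^2 = 1" using S1[OF N] M0 N by simp
    show "g = 1" using g1 g2 a b by linarith
  qed
  have key: "frob_sq D * frob_sq A / frob_sq (D ** A) = g"
    unfolding fD SA fDA C_def[symmetric] Q_def[symmetric] g_def ..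
  have c1: "1 \<le> g" using r1 g1 by linarith
  have goal: "1 \<le> g \<and> 1 \<le> S / (sv 1)^2 \<and> S / (sv 1)^2 \<le> g \<and>
       g \<le> S / (sv N)^2 \<and> (g = 1 \<longleftrightarrow> N = 1)"
    by (simp only: c1 r1 g1 g2 iff simp_thms)
  show ?thesis
    unfolding Let_def N_def[symmetric] G0_def[symmetric] D_def[symmetric] S_def[symmetric] key e1 e2
    by (rule goal)
qed

end
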